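(* Let $n\geq 0$, let $\{b^n_j\}_{j=0}^n$ be a basis of the space of real univariate polynomials of degree at most $n$, and let $\mathbf{x}\in\mathbb{R}^{n+1}$ with $\mathbf{x}_0<\dots<\mathbf{x}_n$. Let $v$ and $w$ be polynomials of degree $n+1$ such that $v(\mathbf{x}_i)=0$, $v'(\mathbf{x}_i)\neq 0$ and $w(\mathbf{x}_i)\neq 0$ for each $0\le i\le n$. Then $V^n(\mathbf{x})$ is invertible and $$(V^n(\mathbf{x}))^{-1}=\mathrm{Bez}(v,w)\,(V^n(\mathbf{x}))^T\,\mathrm{diag}\!\left(\frac{1}{v'(\mathbf{x}_j)w(\mathbf{x}_j)}\right)_{j=0}^n.$$
   Context: The Vandermonde matrix $V^n(\mathbf{x})$ is the $(n+1)\times(n+1)$ matrix with entries $V^n_{ij}(\mathbf{x})=b^n_j(\mathbf{x}_i)$. For polynomials $v,w$ of degree at most $n+1$, the Bézout matrix $\mathrm{Bez}(v,w)$ is the unique $(n+1)\times(n+1)$ matrix satisfying $$\frac{v(s)w(t)-v(t)w(s)}{s-t}=\sum_{i,j=0}^n \mathrm{Bez}_{ij}(v,w)\,b^n_i(s)\,b^n_j(t).$$ *)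

theory Defs
  imports "HOL-Computational_Algebra.Polynomial" "Jordan_Normal_Form.Matrix"
begin

definition is_poly_basis :: "nat \<Rightarrow> (nat \<Rightarrow> real poly) \<Rightarrow> bool" where
  "is_poly_basis n b \<longleftrightarrow>
     (\<forall>j\<le>n. degree (b j) \<le> n) \<and>
     (\<forall>p. degree p \<le> n \<longrightarrow> (\<exists>c. p = (\<Sum>j\<le>n. Polynomial.smult (c j) (b j)))) \<and>
     (\<forall>c. (\<Sum>j\<le>n. Polynomial.smult (c j) (b j)) = 0 \<longrightarrow> (\<forall>j\<le>n. c j = 0))"

definition vandermonde :: "nat \<Rightarrow> (nat \<Rightarrow> real poly) \<Rightarrow> (nat \<Rightarrow> real) \<Rightarrow> real mat" where
  "vandermonde n b x = mat (n+1) (n+1) (\<lambda>(i,j). poly (b j) (x i))"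

definition bezout :: "nat \<Rightarrow> (nat \<Rightarrow> real poly) \<Rightarrow> real poly \<Rightarrow> real poly \<Rightarrow> real mat" where
  "bezout n b v w = (THE M. M \<in> carrier_mat (n+1) (n+1) \<and>
     (\<forall>s t. s \<noteq> t \<longrightarrow>
        (poly v s * poly w t - poly v t * poly w s) / (s - t) =
        (\<Sum>i\<le>n. \<Sum>j\<le>n. M $$ (i,j) * poly (b i) s * poly (b j) t)))"

end

theory Submission
  imports Defs "Jordan_Normal_Form.Determinant"
begin

lemma poly_zero_off_point:
  fixes p :: "real poly"
  assumes "\<And>s. s \<noteq> t \<Longrightarrow> poly p s = 0"
  shows "p = 0"
proof (rule ccontr)
  assume "p \<noteq> 0"
  hence "finite (insert t {x. poly p x = 0})" using poly_roots_finite by blast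
  then obtain s :: real where "s \<notin> insert t {x. poly p x = 0}"
    using ex_new_if_finite[OF infinite_UNIV_char_0] by blast
  thus False using assms by auto
qed

lemma basis_indep:
  assumes "is_poly_basis n b" "(\<Sum>j\<le>n. Polynomial.smult (c j) (b j)) = 0" "j \<le> n"
  shows "c j = 0"
  using assms unfolding is_poly_basis_def by blast

lemma basis_indep2:
  fixes A :: "nat \<Rightarrow> nat \<Rightarrow> real"
  assumes B: "is_poly_basis n b"
    and H: "\<And>s t. s \<noteq> t \<Longrightarrow> (\<Sum>i\<le>n. \<Sum>j\<le>n. A i j * poly (b i) s * poly (b j) t) = 0"
    and ij: "i \<le> n" "j \<le> n"
  shows "A i j = 0"
proof -
  have inner: "(\<Sum>j\<le>n. A i j * poly (b j) t) = 0" if "i \<le> n" for i t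
  proof -
    let ?p = "\<Sum>i\<le>n. Polynomial.smult (\<Sum>j\<le>n. A i j * poly (b j) t) (b i)"
    have "?p = 0"
    proof (rule poly_zero_off_point[of t])
      fix s assume "s \<noteq> t"
      have "poly ?p s = (\<Sum>i\<le>n. \<Sum>j\<le>n. A i j * poly (b i) s * poly (b j) t)"
        by (simp add: poly_sum sum_distrib_left mult_ac)
      thus "poly ?p s = 0" using H[OF \<open>s \<noteq> t\<close>] by simp
    qed
    thus ?thesis using basis_indep[OF B, of "\<lambda>i. \<Sum>j\<le>n. A i j * poly (b j) t"] that by blast
  qed
  have "(\<Sum>j\<le>n. Polynomial.smult (A i j) (b j)) = 0"
    using inner[OF ij(1)] poly_all_0_iff_0[of "\<Sum>j\<le>n. Polynomial.smult (A i j) (b j)"]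
    by (simp add: poly_sum mult_ac)
  thus ?thesis using basis_indep[OF B] ij(2) by blast
qed

theorem theorem2p1:
  fixes n :: nat and b :: "nat \<Rightarrow> real poly" and x :: "nat \<Rightarrow> real" and v w :: "real poly"
  assumes "is_poly_basis n b"
    and "\<forall>i<n. x i < x (Suc i)"
    and "degree v = n + 1" and "degree w = n + 1"
    and "\<forall>i\<le>n. poly v (x i) = 0 \<and> poly (pderiv v) (x i) \<noteq> 0 \<and> poly w (x i) \<noteq> 0"
  shows "invertible_mat (vandermonde n b x) \<and>
    (let M = bezout n b v w * transpose_mat (vandermonde n b x) *
             mat (n+1) (n+1) (\<lambda>(i,j). if i = j then 1 / (poly (pderiv v) (x j) * poly w (x j)) else 0)
     in inverts_mat (vandermonde n b x) M \<and> inverts_mat M (vandermonde n b x))"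
proof -
  note B = assms(1)
  have mono: "x i < x j" if "i < j" "j \<le> n" for i j
    using that
  proof (induction j)
    case 0 thus ?case by simp
  next
    case (Suc j)
    have "x j < x (Suc j)" using assms(2) Suc.prems by auto
    thus ?case using Suc by (cases "i = j") auto
  qed
  have xinj: "x i \<noteq> x j" if "i \<le> n" "j \<le> n" "i \<noteq> j" for i j
    using mono[of i j] mono[of j i] that by (cases "i < j") auto
  have injx: "inj_on x {..n}" using xinj by (auto simp: inj_on_def)
  define X where "X = x ` {..n}"
  have cardX: "card X = n + 1" unfolding X_def using card_image[OF injx] by simp
  have finX: "finite X" unfolding X_def by simp
  define R where "R k = (\<Prod>m\<in>{..n}-{k}. [:- x m, 1:])" for k
  define rh where "rh k = poly (R k) (x k)" for k
  define L where "L k = Polynomial.smult (1 / rh k) (R k)" for k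
  define a where "a = lead_coeff v"
  define P0 where "P0 = (\<Prod>m\<in>{..n}. [:- x m, 1:])"
  define c where "c k = poly (pderiv v) (x k) * poly w (x k)" for k
  have rho_nz: "rh k \<noteq> 0" if "k \<le> n" for k
    using xinj[of k] that by (auto simp: rh_def R_def poly_prod)
  have ell_delta: "poly (L k) (x m) = (if m = k then 1 else 0)" if "k \<le> n" "m \<le> n" for k m
  proof (cases "m = k")
    case True thus ?thesis using rho_nz[OF that(1)] by (simp add: L_def rh_def)
  next
    case False
    have "poly (R k) (x m) = 0" using False that
      by (auto simp: R_def poly_prod prod_zero_iff)
    thus ?thesis using False by (simp add: L_def)
  qed
  have deg_R: "degree (R k) \<le> n" if "k \<le> n" for k
  proof -
    have "degree (R k) \<le> sum (degree \<circ> (\<lambda>m. [:- x m, 1:])) ({..n}-{k})"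
      unfolding R_def by (rule degree_prod_sum_le) simp
    also have "\<dots> = card ({..n}-{k})" by simp
    also have "\<dots> = n" using that by simp
    finally show ?thesis .
  qed
  have deg_ell: "degree (L k) \<le> n" if "k \<le> n" for k
    using deg_R[OF that] by (simp add: L_def)
  have degP0: "degree P0 = n + 1" unfolding P0_def
    by (subst degree_prod_eq_sum_degree) auto
  have lcP0: "lead_coeff P0 = 1" unfolding P0_def by (simp add: lead_coeff_prod)
  have vP0: "v = Polynomial.smult a P0"
  proof (rule poly_eqI_degree_lead_coeff[of _ "n+1" _ X])
    show "poly.coeff v (n + 1) = poly.coeff (Polynomial.smult a P0) (n + 1)"
      using lcP0 degP0 assms(3) by (simp add: a_def)
    show "n + 1 \<le> card X" using cardX by simp
    show "degree v \<le> n + 1" using assms(3) by simp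
    show "degree (Polynomial.smult a P0) \<le> n + 1" using degP0 by simp
    fix z assume "z \<in> X"
    then obtain m where "m \<le> n" "z = x m" unfolding X_def by auto
    thus "poly v z = poly (Polynomial.smult a P0) z" using assms(5)
      by (auto simp: P0_def poly_prod prod_zero_iff)
  qed
  have P0split: "P0 = [:- x k, 1:] * R k" if "k \<le> n" for k
    unfolding P0_def R_def using that by (subst prod.remove[of _ k]) auto
  have dv: "poly (pderiv v) (x k) = a * rh k" if "k \<le> n" for k
  proof -
    have d1: "pderiv [:- x k, 1:] = 1" by (simp add: pderiv_pCons)
    have "pderiv P0 = [:- x k, 1:] * pderiv (R k) + R k * pderiv [:- x k, 1:]"
      unfolding P0split[OF that] by (rule pderiv_mult)
    hence "poly (pderiv P0) (x k) = rh k" unfolding d1 by (simp add: rh_def)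
    thus ?thesis using vP0 by (simp add: pderiv_smult)
  qed
  have vfac: "poly v t = poly (pderiv v) (x k) * poly (L k) t * (t - x k)" if "k \<le> n" for k t
  proof -
    have "poly v t = a * ((t - x k) * poly (R k) t)"
      using vP0 P0split[OF that] by (simp add: algebra_simps)
    thus ?thesis using dv[OF that] rho_nz[OF that] by (simp add: L_def)
  qed
  define E where "E s t = (\<Sum>k\<le>n. c k * poly (L k) s * poly (L k) t)" for s t
  have sumdelta: "(\<Sum>k\<le>n. f k * poly (L k) (x m)) = f m" if "m \<le> n" for f m
  proof -
    have "(\<Sum>k\<le>n. f k * poly (L k) (x m)) = (\<Sum>k\<le>n. if k = m then f k else 0)"
      using that by (intro sum.cong) (auto simp: ell_delta)
    thus ?thesis using that by simp
  qed
  have key1: "(poly v s * poly w t - poly v t * poly w s) / (s - t) = E s t"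
    if "t \<notin> X" "s \<noteq> t" for s t
  proof -
    define N where "N = Polynomial.smult (poly w t) v - Polynomial.smult (poly v t) w"
    define G where "G = [:- t, 1:] * (\<Sum>k\<le>n. Polynomial.smult (c k * poly (L k) t) (L k))"
    have "N = G"
    proof (rule poly_eqI_degree[of "insert t X"])
      have "card (insert t X) = n + 2" using cardX finX that(1) by simp
      moreover have "degree N \<le> n + 1" unfolding N_def using assms(3,4)
        by (intro order.trans[OF degree_diff_le_max]) auto
      moreover have "degree G \<le> n + 1"
      proof -
        have "degree (\<Sum>k\<le>n. Polynomial.smult (c k * poly (L k) t) (L k)) \<le> n"
          by (intro degree_sum_le) (auto intro: order.trans[OF degree_smult_le] deg_ell)
        thus ?thesis unfolding G_def
          by (intro order.trans[OF degree_mult_le]) auto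
      qed
      ultimately show "degree N < card (insert t X)" "degree G < card (insert t X)" by auto
      fix z assume "z \<in> insert t X"
      then consider "z = t" | m where "m \<le> n" "z = x m" unfolding X_def by auto
      thus "poly N z = poly G z"
      proof cases
        case 1 thus ?thesis by (simp add: N_def G_def)
      next
        case 2
        have "poly G z = (x m - t) * (c m * poly (L m) t)"
          using 2 sumdelta[OF 2(1), of "\<lambda>k. c k * poly (L k) t"]
          by (simp add: G_def poly_sum mult_ac algebra_simps)
        also have "\<dots> = - poly w (x m) * poly v t"
          unfolding c_def vfac[OF 2(1), of t] by (simp add: algebra_simps)
        also have "\<dots> = poly N z" using 2 assms(5) by (simp add: N_def)
        finally show ?thesis by simp
      qed
    qed
    have pN: "poly N s = poly v s * poly w t - poly v t * poly w s"
      by (simp add: N_def mult_ac)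
    have "poly G s = poly [:- t, 1:] s * poly (\<Sum>k\<le>n. Polynomial.smult (c k * poly (L k) t) (L k)) s"
      unfolding G_def by (rule poly_mult)
    also have "\<dots> = (s - t) * E s t"
      by (simp add: E_def poly_sum mult_ac)
    finally have "poly v s * poly w t - poly v t * poly w s = (s - t) * E s t"
      using pN \<open>N = G\<close> by simp
    thus ?thesis using that(2) by simp
  qed
  have Edelta: "E (x i) (x k) = (if i = k then c k else 0)" if "i \<le> n" "k \<le> n" for i k
  proof -
    have "E (x i) (x k) = c k * poly (L k) (x i)"
      using sumdelta[OF that(2), of "\<lambda>m. c m * poly (L m) (x i)"] by (simp add: E_def)
    thus ?thesis using ell_delta[OF that(2,1)] by auto
  qed
  have key2: "(poly v s * poly w t - poly v t * poly w s) / (s - t) = E s t"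
    if "s \<noteq> t" for s t
  proof (cases "t \<in> X")
    case False thus ?thesis using key1 that by blast
  next
    case tX: True
    show ?thesis
    proof (cases "s \<in> X")
      case False
      have "(poly v t * poly w s - poly v s * poly w t) / (t - s) = E t s"
        using key1[OF False] that by auto
      moreover have "(poly v s * poly w t - poly v t * poly w s) / (s - t)
          = (poly v t * poly w s - poly v s * poly w t) / (t - s)"
        by (metis minus_diff_eq minus_divide_divide)
      moreover have "E t s = E s t" by (simp add: E_def mult_ac)
      ultimately show ?thesis by simp
    next
      case True
      then obtain i j where ij: "i \<le> n" "j \<le> n" "s = x i" "t = x j"
        using tX unfolding X_def by auto
      hence "i \<noteq> j" using that by auto
      thus ?thesis using ij assms(5) Edelta[of i j] by simp
    qed
  qed
  have "\<forall>k. \<exists>cc. k \<le> n \<longrightarrow> L k = (\<Sum>i\<le>n. Polynomial.smult (cc i) (b i))"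
    using B deg_ell unfolding is_poly_basis_def by blast
  then obtain \<alpha> where alpha: "\<And>k. k \<le> n \<Longrightarrow> L k = (\<Sum>i\<le>n. Polynomial.smult (\<alpha> k i) (b i))"
    by metis
  define Bf where "Bf i j = (\<Sum>k\<le>n. c k * \<alpha> k i * \<alpha> k j)" for i j
  have Eexp: "E s t = (\<Sum>i\<le>n. \<Sum>j\<le>n. Bf i j * poly (b i) s * poly (b j) t)" for s t
  proof -
    have "E s t = (\<Sum>k\<le>n. c k * (\<Sum>i\<le>n. \<alpha> k i * poly (b i) s) * (\<Sum>j\<le>n. \<alpha> k j * poly (b j) t))"
      unfolding E_def by (intro sum.cong refl) (simp add: alpha poly_sum)
    also have "\<dots> = (\<Sum>k\<le>n. \<Sum>i\<le>n. \<Sum>j\<le>n. c k * \<alpha> k i * \<alpha> k j * poly (b i) s * poly (b j) t)"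
      by (simp add: sum_product sum_distrib_left mult_ac)
    also have "\<dots> = (\<Sum>i\<le>n. \<Sum>k\<le>n. \<Sum>j\<le>n. c k * \<alpha> k i * \<alpha> k j * poly (b i) s * poly (b j) t)"
      by (rule sum.swap)
    also have "\<dots> = (\<Sum>i\<le>n. \<Sum>j\<le>n. \<Sum>k\<le>n. c k * \<alpha> k i * \<alpha> k j * poly (b i) s * poly (b j) t)"
      by (intro sum.cong refl sum.swap)
    also have "\<dots> = (\<Sum>i\<le>n. \<Sum>j\<le>n. Bf i j * poly (b i) s * poly (b j) t)"
      by (simp add: Bf_def sum_distrib_right)
    finally show ?thesis .
  qed
  define B0 where "B0 = mat (n+1) (n+1) (\<lambda>(i,j). Bf i j)"
  have B0sum: "(\<Sum>i\<le>n. \<Sum>j\<le>n. B0 $$ (i,j) * f i j) = (\<Sum>i\<le>n. \<Sum>j\<le>n. Bf i j * f i j)" for f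
    by (intro sum.cong refl) (simp add: B0_def)
  have bez: "bezout n b v w = B0"
    unfolding bezout_def
  proof (rule the_equality)
    show "B0 \<in> carrier_mat (n + 1) (n + 1) \<and>
      (\<forall>s t. s \<noteq> t \<longrightarrow> (poly v s * poly w t - poly v t * poly w s) / (s - t) =
        (\<Sum>i\<le>n. \<Sum>j\<le>n. B0 $$ (i, j) * poly (b i) s * poly (b j) t))"
      using key2 Eexp B0sum[of "\<lambda>i j. poly (b i) _ * poly (b j) _"]
      by (simp add: B0_def mult.assoc)
  next
    fix M assume M: "M \<in> carrier_mat (n + 1) (n + 1) \<and>
      (\<forall>s t. s \<noteq> t \<longrightarrow> (poly v s * poly w t - poly v t * poly w s) / (s - t) =
        (\<Sum>i\<le>n. \<Sum>j\<le>n. M $$ (i, j) * poly (b i) s * poly (b j) t))"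
    show "M = B0"
    proof (rule eq_matI)
      fix i j assume "i < dim_row B0" "j < dim_col B0"
      hence ij: "i \<le> n" "j \<le> n" by (auto simp: B0_def)
      have "M $$ (i,j) - Bf i j = 0"
      proof (rule basis_indep2[OF B _ ij, of "\<lambda>i j. M $$ (i,j) - Bf i j"])
        fix s t :: real assume "s \<noteq> t"
        hence "(\<Sum>i\<le>n. \<Sum>j\<le>n. M $$ (i, j) * poly (b i) s * poly (b j) t) =
               (\<Sum>i\<le>n. \<Sum>j\<le>n. Bf i j * poly (b i) s * poly (b j) t)"
          using M[THEN conjunct2, rule_format, OF \<open>s \<noteq> t\<close>] key2[OF \<open>s \<noteq> t\<close>] Eexp[of s t]
          by simp
        thus "(\<Sum>i\<le>n. \<Sum>j\<le>n. (M $$ (i, j) - Bf i j) * poly (b i) s * poly (b j) t) = 0"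
          by (simp add: left_diff_distrib sum_subtractf)
      qed
      thus "M $$ (i,j) = B0 $$ (i,j)" using ij by (simp add: B0_def)
    qed (use M in \<open>auto simp: B0_def\<close>)
  qed
  define V where "V = vandermonde n b x"
  define Dg where "Dg = mat (n+1) (n+1) (\<lambda>(i,j). if i = j then 1 / (poly (pderiv v) (x j) * poly w (x j)) else (0::real))"
  define M where "M = B0 * transpose_mat V * Dg"
  have V: "V \<in> carrier_mat (n+1) (n+1)" by (simp add: V_def vandermonde_def)
  have B0c: "B0 \<in> carrier_mat (n+1) (n+1)" by (simp add: B0_def)
  have Dgc: "Dg \<in> carrier_mat (n+1) (n+1)" by (simp add: Dg_def)
  have Mc: "M \<in> carrier_mat (n+1) (n+1)" unfolding M_def
    by (rule mult_carrier_mat[OF mult_carrier_mat[OF B0c] Dgc]) (use V in simp)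
  have cnz: "c k \<noteq> 0" if "k \<le> n" for k using assms(5) that by (simp add: c_def)
  have BV: "(B0 * transpose_mat V) $$ (r,q) = (\<Sum>l\<le>n. Bf r l * poly (b l) (x q))"
    if "r \<le> n" "q \<le> n" for r q
    using that by (simp add: B0_def V_def vandermonde_def scalar_prod_def atLeast0LessThan lessThan_Suc_atMost)
  have Me: "M $$ (r,k) = (\<Sum>l\<le>n. Bf r l * poly (b l) (x k)) / c k"
    if "r \<le> n" "k \<le> n" for r k
  proof -
    have "M $$ (r,k) = (\<Sum>q\<le>n. (B0 * transpose_mat V) $$ (r,q) * Dg $$ (q,k))"
      using that by (simp add: M_def B0_def V_def vandermonde_def Dg_def scalar_prod_def atLeast0LessThan lessThan_Suc_atMost)
    also have "\<dots> = (\<Sum>q\<le>n. if q = k then (B0 * transpose_mat V) $$ (r,k) / c k else 0)"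
      using that by (intro sum.cong refl) (auto simp: Dg_def c_def)
    also have "\<dots> = (B0 * transpose_mat V) $$ (r,k) / c k" using that by simp
    finally show ?thesis using BV that by simp
  qed
  have VM: "V * M = 1\<^sub>m (n+1)"
  proof (rule eq_matI)
    fix i k assume "i < dim_row (1\<^sub>m (n+1) :: real mat)" "k < dim_col (1\<^sub>m (n+1) :: real mat)"
    hence ik: "i \<le> n" "k \<le> n" by auto
    have "(V * M) $$ (i,k) = (\<Sum>r\<le>n. poly (b r) (x i) * M $$ (r,k))"
      using ik Mc by (simp add: V_def vandermonde_def scalar_prod_def atLeast0LessThan lessThan_Suc_atMost)
    also have "\<dots> = (\<Sum>r\<le>n. \<Sum>l\<le>n. Bf r l * poly (b r) (x i) * poly (b l) (x k)) / c k"
      using ik by (simp add: Me sum_divide_distrib sum_distrib_left mult_ac)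
    also have "\<dots> = E (x i) (x k) / c k" using Eexp by simp
    also have "\<dots> = 1\<^sub>m (n+1) $$ (i,k)" using ik Edelta cnz by simp
    finally show "(V * M) $$ (i,k) = 1\<^sub>m (n+1) $$ (i,k)" .
  qed (use Mc V in auto)
  have MV: "M * V = 1\<^sub>m (n+1)" by (rule mat_mult_left_right_inverse[OF V Mc VM])
  have inv1: "inverts_mat V M" using VM V by (simp add: inverts_mat_def)
  have inv2: "inverts_mat M V" using MV Mc by (simp add: inverts_mat_def)
  have "invertible_mat V" using inv1 inv2 V unfolding invertible_mat_def square_mat.simps by auto
  thus ?thesis using inv1 inv2 unfolding Let_def bez V_def[symmetric] Dg_def[symmetric] M_def[symmetric]
    by simp
qed

end
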